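(* Let $i,j\ge 1$ be integers with $i+j\ge 16$, and let $m=i+j+2(i+j)^{3/4}$. Let $S'$ be a set of $m$ distinct elements of a totally ordered universe, where the rank of an element of $S'$ is its position in increasing order ($1$ for the smallest, $m$ for the largest). Let $R$ be a multiset of $m^{3/4}$ elements of $S'$ drawn uniformly and independently at random with replacement, and let $k=j\,m^{-1/4}+m^{1/2}/2$. Let $E_1$ be the event that at least $k$ of the samples in $R$ (counted with multiplicity) have rank at most $j$ in $S'$, and let $E_2$ be the event that at least $m^{3/4}-k$ of the samples in $R$ (counted with multiplicity) have rank at least $m-i+1$ in $S'$. Then ${\rm Prob}(E_1)\le m^{-1/4}$ and ${\rm Prob}(E_2)\le m^{-1/4}$.
   Context: Quantities such as $m^{3/4}$, $m^{1/2}/2$ and $j\,m^{-1/4}$ are treated as integers (floors/ceilings omitted). *)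

theory Defs
  imports "HOL-Probability.Probability"
begin

definition rank :: "'a::linorder set \<Rightarrow> 'a \<Rightarrow> nat" where
  "rank S x = card {y \<in> S. y \<le> x}"

text \<open>A sequence of s independent uniform draws from S (with replacement) is a
  uniformly random element of the function space PiE {..<s} (\<lambda>_. S).\<close>
definition samples :: "nat \<Rightarrow> (nat \<Rightarrow> 'a) \<Rightarrow> 'a multiset" where
  "samples s f = image_mset f (mset_set {..<s})"

definition sample_pmf :: "'a set \<Rightarrow> nat \<Rightarrow> (nat \<Rightarrow> 'a) pmf" where
  "sample_pmf S s = pmf_of_set (PiE {..<s} (\<lambda>_. S))"

end

theory Submission
  imports Defs
begin


lemma size_samples: "size (filter_mset P (samples s f)) = card {l\<in>{..<s}. P (f l)}"
  unfolding samples_def by (simp add: filter_mset_image_mset)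

lemma sample_dist:
  assumes "finite S" "S \<noteq> {}"
  shows "map_pmf (\<lambda>f. size (filter_mset P (samples s f))) (sample_pmf S s)
         = binomial_pmf s (card {x\<in>S. P x} / card S)"
proof -
  define p where "p = real (card {x\<in>S. P x}) / card S"
  have p01: "p \<in> {0..1}" unfolding p_def using assms
    by (auto simp: divide_le_eq_1 card_mono intro: card_mono)
  have 1: "PiE {..<s} (\<lambda>_. S) = PiE_dflt {..<s} undefined (\<lambda>_. S)"
    by (auto simp: PiE_def PiE_dflt_def extensional_def)
  have 2: "sample_pmf S s = Pi_pmf {..<s} undefined (\<lambda>_. pmf_of_set S)"
    unfolding sample_pmf_def 1 using assms by (simp add: Pi_pmf_of_set)
  have 3: "map_pmf P (pmf_of_set S) = bernoulli_pmf p"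
  proof (rule pmf_eqI)
    fix b :: bool
    have "pmf (map_pmf P (pmf_of_set S)) b = measure (pmf_of_set S) (P -` {b})"
      by (simp add: pmf_map)
    also have "\<dots> = card (S \<inter> P -` {b}) / card S"
      using assms by (simp add: measure_pmf_of_set)
    finally have e: "pmf (map_pmf P (pmf_of_set S)) b = card (S \<inter> P -` {b}) / card S" .
    show "pmf (map_pmf P (pmf_of_set S)) b = pmf (bernoulli_pmf p) b"
    proof (cases b)
      case True
      have "S \<inter> P -` {b} = {x\<in>S. P x}" using True by auto
      then show ?thesis using e True p01 by (simp add: p_def)
    next
      case False
      have "S \<inter> P -` {b} = S - {x\<in>S. P x}" using False by auto
      then have "card (S \<inter> P -` {b}) = card S - card {x\<in>S. P x}"
        using assms by (simp add: card_Diff_subset)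
      moreover have "card {x\<in>S. P x} \<le> card S" using assms by (intro card_mono) auto
      ultimately show ?thesis using e False p01 assms
        by (simp add: p_def of_nat_diff diff_divide_distrib)
    qed
  qed
  have 4: "Pi_pmf {..<s} (P undefined) (\<lambda>_. map_pmf P (pmf_of_set S))
           = map_pmf (\<lambda>h. P \<circ> h) (Pi_pmf {..<s} undefined (\<lambda>_. pmf_of_set S))"
    by (rule Pi_pmf_map) auto
  have "binomial_pmf s p = map_pmf (\<lambda>f. card {x\<in>{..<s}. f x})
          (Pi_pmf {..<s} (P undefined) (\<lambda>_. bernoulli_pmf p))"
    by (rule binomial_pmf_altdef') (use p01 in auto)
  also have "\<dots> = map_pmf (\<lambda>f. size (filter_mset P (samples s f))) (sample_pmf S s)"
    unfolding 3[symmetric] 4 2 map_pmf_comp size_samples by (simp add: o_def)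
  finally show ?thesis unfolding p_def by simp
qed



lemma tail_bound:
  assumes "finite S" "S \<noteq> {}" "s > 0" "\<epsilon> \<ge> 0"
    and c: "real s * (card {x\<in>S. P x} / card S) + \<epsilon> \<le> K"
  shows "measure_pmf.prob (sample_pmf S s) {f. real (size (filter_mset P (samples s f))) \<ge> K}
         \<le> exp (-2 * \<epsilon>\<^sup>2 / s)"
proof -
  define p where "p = real (card {x\<in>S. P x}) / card S"
  have p01: "p \<in> {0..1}" unfolding p_def using assms
    by (auto simp: divide_le_eq_1 card_mono intro: card_mono)
  interpret binomial_distribution s p by unfold_locales (rule p01)
  have "measure_pmf.prob (sample_pmf S s) {f. real (size (filter_mset P (samples s f))) \<ge> K}
      = measure_pmf.prob (map_pmf (\<lambda>f. size (filter_mset P (samples s f))) (sample_pmf S s)) {x. real x \<ge> K}"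
    by simp
  also have "\<dots> = measure_pmf.prob (binomial_pmf s p) {x. real x \<ge> K}"
    unfolding sample_dist[OF assms(1,2)] p_def ..
  also have "\<dots> \<le> measure_pmf.prob (binomial_pmf s p) {x. real x \<ge> s * p + \<epsilon>}"
    using c unfolding p_def[symmetric] by (intro measure_pmf.finite_measure_mono) auto
  also have "\<dots> \<le> exp (-2 * \<epsilon>\<^sup>2 / s)"
    by (rule prob_ge) (use assms in auto)
  finally show ?thesis .
qed

lemma rank_bij:
  fixes S :: "'a::linorder set"
  assumes "finite S"
  shows "bij_betw (rank S) S {1..card S}"
proof -
  have inj: "inj_on (rank S) S"
  proof (rule inj_onI)
    fix x y assume xy: "x \<in> S" "y \<in> S" "rank S x = rank S y"
    show "x = y"
    proof (rule ccontr)
      assume "x \<noteq> y"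
      then consider "x < y" | "y < x" by (meson linorder_neqE)
      then show False
      proof cases
        case 1
        have "{z\<in>S. z \<le> x} \<subseteq> {z\<in>S. z \<le> y}" using 1 by auto
        moreover have "y \<in> {z\<in>S. z \<le> y} - {z\<in>S. z \<le> x}" using 1 xy by auto
        ultimately have "{z\<in>S. z \<le> x} \<subset> {z\<in>S. z \<le> y}" by blast
        then have "rank S x < rank S y" unfolding rank_def
          using assms by (intro psubset_card_mono) auto
        then show False using xy by simp
      next
        case 2
        have "{z\<in>S. z \<le> y} \<subseteq> {z\<in>S. z \<le> x}" using 2 by auto
        moreover have "x \<in> {z\<in>S. z \<le> x} - {z\<in>S. z \<le> y}" using 2 xy by auto
        ultimately have "{z\<in>S. z \<le> y} \<subset> {z\<in>S. z \<le> x}" by blast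
        then have "rank S y < rank S x" unfolding rank_def
          using assms by (intro psubset_card_mono) auto
        then show False using xy by simp
      qed
    qed
  qed
  have sub: "rank S ` S \<subseteq> {1..card S}"
  proof
    fix r assume "r \<in> rank S ` S"
    then obtain x where x: "x \<in> S" "r = rank S x" by auto
    have "{z\<in>S. z \<le> x} \<noteq> {}" using x by auto
    then have "rank S x \<ge> 1" unfolding rank_def using assms
      by (simp add: Suc_le_eq card_gt_0_iff)
    moreover have "rank S x \<le> card S" unfolding rank_def using assms by (intro card_mono) auto
    ultimately show "r \<in> {1..card S}" using x by auto
  qed
  have "card (rank S ` S) = card {1..card S}" using card_image[OF inj] by simp
  then have "rank S ` S = {1..card S}" using sub by (intro card_subset_eq) auto
  then show ?thesis using inj unfolding bij_betw_def by simp
qed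

lemma card_rank_set:
  fixes S :: "'a::linorder set"
  assumes "finite S" "A \<subseteq> {1..card S}"
  shows "card {x\<in>S. rank S x \<in> A} = card A"
proof -
  have b: "bij_betw (rank S) S {1..card S}" by (rule rank_bij[OF assms(1)])
  have "rank S ` {x\<in>S. rank S x \<in> A} = A"
    using b assms(2) unfolding bij_betw_def by force
  moreover have "inj_on (rank S) {x\<in>S. rank S x \<in> A}"
    using b unfolding bij_betw_def by (auto intro: inj_on_subset)
  ultimately show ?thesis using card_image by fastforce
qed

lemma card_rank_le:
  fixes S :: "'a::linorder set"
  assumes "finite S" "j \<le> card S"
  shows "card {x\<in>S. rank S x \<le> j} = j"
proof -
  have "{x\<in>S. rank S x \<le> j} = {x\<in>S. rank S x \<in> {1..j}}"
    using rank_bij[OF assms(1)] unfolding bij_betw_def by force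
  then show ?thesis using card_rank_set[OF assms(1), of "{1..j}"] assms by simp
qed

lemma card_rank_ge:
  fixes S :: "'a::linorder set"
  assumes "finite S" "i \<le> card S"
  shows "card {x\<in>S. rank S x \<ge> card S - i + 1} = i"
proof -
  have "{x\<in>S. rank S x \<ge> card S - i + 1} = {x\<in>S. rank S x \<in> {card S - i + 1..card S}}"
    using rank_bij[OF assms(1)] unfolding bij_betw_def by force
  then show ?thesis using card_rank_set[OF assms(1), of "{card S - i + 1..card S}"] assms by simp
qed



lemma poly1_aux:
  fixes z :: real assumes "z \<ge> 0"
  shows "16*((19/8+z)^4-(19/8+z)^3-3/4*(19/8+z))^3 - ((19/8+z)^3+3/4*(19/8+z)+1)^4
     = (357877244049311/68719476736) + (382184333241807/2147483648) * z ^ 1 + (415608529591623/536870912) * z ^ 2 + (54270269947963/33554432) * z ^ 3 + (34570304701857/16777216) * z ^ 4 + (462052741887/262144) * z ^ 5 + (69431229729/65536) * z ^ 6 + (1867609863/4096) * z ^ 7 + (575210961/4096) * z ^ 8 + (3882227/128) * z ^ 9 + (140007/32) * z ^ 10 + (759/2) * z ^ 11 + 15 * z ^ 12" (is "?l = ?r")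
  by algebra

lemma poly1:
  fixes u :: real assumes "u \<ge> 19/8"
  shows "16*(u^4-u^3-3/4*u)^3 \<ge> (u^3+3/4*u+1)^4"
proof -
  define z where "z = u - 19/8"
  have z: "z \<ge> 0" "u = 19/8 + z" using assms by (auto simp: z_def)
  have "0 \<le> (357877244049311/68719476736) + (382184333241807/2147483648) * z ^ 1 + (415608529591623/536870912) * z ^ 2 + (54270269947963/33554432) * z ^ 3 + (34570304701857/16777216) * z ^ 4 + (462052741887/262144) * z ^ 5 + (69431229729/65536) * z ^ 6 + (1867609863/4096) * z ^ 7 + (575210961/4096) * z ^ 8 + (3882227/128) * z ^ 9 + (140007/32) * z ^ 10 + (759/2) * z ^ 11 + 15 * z ^ 12"
    using z(1) by (intro add_nonneg_nonneg mult_nonneg_nonneg zero_le_power) auto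
  then show ?thesis using poly1_aux[OF z(1)] unfolding z(2) by linarith
qed

lemma poly2_aux:
  fixes x :: real
  shows "(2729 + 19*x)^8 - 8^7*304^8*(19+x) = 169784774798472464390550593 + 18369441279413986681211096 * x ^ 1 + 4175288095787051492219068 * x ^ 2 + 58138859523601303299496 * x ^ 3 + 505972119342444468070 * x ^ 4 + 2818166439723399016 * x ^ 5 + 9810399845134588 * x ^ 6 + 19515007805848 * x ^ 7 + 16983563041 * x ^ 8"
  by algebra

lemma poly2:
  fixes u :: real assumes "u \<ge> 19/8"
  shows "(1 + (u/2 - 4/19)/8)^8 \<ge> u"
proof -
  define x where "x = 8*u - 19"
  have x: "x \<ge> 0" "u = (19+x)/8" using assms by (auto simp: x_def)
  have "0 \<le> 169784774798472464390550593 + 18369441279413986681211096 * x ^ 1 + 4175288095787051492219068 * x ^ 2 + 58138859523601303299496 * x ^ 3 + 505972119342444468070 * x ^ 4 + 2818166439723399016 * x ^ 5 + 9810399845134588 * x ^ 6 + 19515007805848 * x ^ 7 + 16983563041 * x ^ 8"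
    using x(1) by (intro add_nonneg_nonneg mult_nonneg_nonneg zero_le_power) auto
  then have a: "(2729 + 19*x)^8 \<ge> 8^7*304^8*(19+x)" using poly2_aux[of x] by linarith
  have b: "1 + (u/2 - 4/19)/8 = (2729 + 19*x)/2432" unfolding x(2) by (simp add: field_simps)
  have "(1 + (u/2 - 4/19)/8)^8 = (2729 + 19*x)^8/2432^8" unfolding b by (simp add: power_divide)
  also have "\<dots> \<ge> (8^7*304^8*(19+x))/2432^8" using a by (intro divide_right_mono) auto
  finally show ?thesis unfolding x(2) by simp
qed



lemma exp_ge_u:
  fixes u :: real assumes "u \<ge> 0"
  shows "u \<le> exp (u/2)"
proof -
  have "(1 + (u/2)/2)^2 \<le> exp (u/2)"
    using exp_ge_one_plus_x_over_n_power_n[of 2 "u/2"] assms by simp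
  moreover have "u \<le> (1 + (u/2)/2)^2"
  proof -
    have "(1 + (u/2)/2)^2 - u = (1 - u/4)^2" by (simp add: power2_eq_square algebra_simps)
    then show ?thesis by (smt (verit) zero_le_power2)
  qed
  ultimately show ?thesis by linarith
qed

lemma exp_ge_u2:
  fixes u :: real assumes "u \<ge> 19/8"
  shows "u \<le> exp (u/2 - 4/19)"
proof -
  have "(1 + (u/2 - 4/19)/8)^8 \<le> exp (u/2 - 4/19)"
    using exp_ge_one_plus_x_over_n_power_n[of 8 "u/2 - 4/19"] assms by simp
  then show ?thesis using poly2[OF assms] by linarith
qed

lemma pow4_le:
  fixes a b :: real assumes "0 \<le> b" "a^4 \<le> b^4"
  shows "a \<le> b"
  using power_le_imp_le_base[of a 3 b] assms by (simp add: eval_nat_numeral)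

lemma root4:
  fixes x :: real assumes "x > 0"
  shows "x powr (1/4) > 0" "(x powr (1/4))^4 = x" "x powr (3/4) = (x powr (1/4))^3"
    "x powr (-1/4) = 1 / x powr (1/4)" "sqrt x = (x powr (1/4))^2"
proof -
  show "x powr (1/4) > 0" using assms by simp
  have "(x powr (1/4)) powr 4 = x" unfolding powr_powr using assms by simp
  then show "(x powr (1/4))^4 = x" using assms by (simp add: powr_numeral)
  have "(x powr (1/4)) powr 3 = x powr (3/4)" unfolding powr_powr by simp
  then show "x powr (3/4) = (x powr (1/4))^3" using assms by (simp add: powr_numeral)
  have "x powr (-1/4) = x powr (-(1/4))" by simp
  then show "x powr (-1/4) = 1 / x powr (1/4)" by (simp add: powr_minus_divide)
  have "(x powr (1/4)) powr 2 = x powr (1/2)" unfolding powr_powr by simp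
  then show "sqrt x = (x powr (1/4))^2" using assms by (simp add: powr_numeral powr_half_sqrt)
qed

theorem lemma1:
  fixes i j m s :: nat and k :: real and S :: "'a::linorder set"
  assumes "i \<ge> 1" and "j \<ge> 1" and "i + j \<ge> 16"
    and "m = i + j + nat \<lfloor>2 * real (i + j) powr (3/4)\<rfloor>"
    and "finite S" and "card S = m"
    and "s = nat \<lfloor>real m powr (3/4)\<rfloor>"
    and "k = real j * real m powr (-1/4) + sqrt (real m) / 2"
  shows "measure_pmf.prob (sample_pmf S s)
           {f. real (size (filter_mset (\<lambda>x. rank S x \<le> j) (samples s f))) \<ge> k}
         \<le> real m powr (-1/4) \<and>
         measure_pmf.prob (sample_pmf S s)
           {f. real (size (filter_mset (\<lambda>x. rank S x \<ge> m - i + 1) (samples s f))) \<ge> real s - k}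
         \<le> real m powr (-1/4)"
proof -
  define n where "n = i + j"
  define t where "t = nat \<lfloor>2 * real n powr (3/4)\<rfloor>"
  have m: "m = n + t" using assms(4) by (simp add: n_def t_def)
  have n16: "real n \<ge> 16" using assms(3) n_def by simp
  define w where "w = real n powr (1/4)"
  have w0: "w > 0" and w4: "w^4 = real n" and w3: "real n powr (3/4) = w^3"
    using root4[of "real n"] n16 unfolding w_def by auto
  have w2: "w \<ge> 2"
    using pow4_le[of w 2] w4 n16 w0 by simp
  have "w^3 \<ge> 2^3" using w2 by (intro power_mono) auto
  then have w38: "2 * w^3 \<ge> 16" by simp
  have t_eq: "real t = of_int \<lfloor>2 * w^3\<rfloor>" unfolding t_def w3
  proof -
    have "\<lfloor>2 * w^3\<rfloor> \<ge> 0" using w38 w0 by simp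
    then show "real (nat \<lfloor>2 * w ^ 3\<rfloor>) = of_int \<lfloor>2 * w^3\<rfloor>" by simp
  qed
  have "(16::int) \<le> \<lfloor>2 * w^3\<rfloor>" using w38 by (simp add: le_floor_iff)
  then have t16: "real t \<ge> 16" unfolding t_eq by (metis of_int_numeral of_int_le_iff)
  have tlt: "2 * w^3 < real t + 1" unfolding t_eq by linarith
  have m32: "real m \<ge> 32" using m t16 n16 by simp
  define u where "u = real m powr (1/4)"
  have u0: "u > 0" and u4: "u^4 = real m" and u3: "real m powr (3/4) = u^3"
    and um: "real m powr (-1/4) = 1/u" and usq: "sqrt (real m) = u^2"
    using root4[of "real m"] m32 unfolding u_def by auto
  have u198: "u \<ge> 19/8"
  proof -
    have "(19/8::real)^4 \<le> 32" by (simp add: power_def)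
    then show ?thesis using pow4_le[of u "19/8"] u4 m32 u0 by simp
  qed
  have tkey: "real t \<ge> u^3 + 3/4*u"
  proof (rule ccontr)
    assume "\<not> ?thesis"
    then have tl: "real t < u^3 + 3/4*u" by simp
    define A where "A = u^4 - u^3 - 3/4*u"
    have u2': "u^2 \<ge> 4" using u198 power_mono[of 2 u 2] by simp
    have "u^2 * (u - 1) \<ge> 4 * 1" using u198 u2' by (intro mult_mono) auto
    then have "u * (u^2 * (u - 1)) \<ge> u * 4" using u0 by (intro mult_left_mono) auto
    then have "u^4 - u^3 \<ge> 4*u" by (simp add: power_def algebra_simps)
    then have A0: "A \<ge> 0" using u0 unfolding A_def by linarith
    have nA: "real n > A" using tl m u4 unfolding A_def by simp
    have "16 * A^3 \<le> 16 * (real n)^3" using nA A0 by (intro mult_left_mono power_mono) auto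
    moreover have "(u^3 + 3/4*u + 1)^4 \<le> 16 * A^3" unfolding A_def using poly1[OF u198] .
    moreover have "(real t + 1)^4 < (u^3 + 3/4*u + 1)^4"
      using tl t16 by (intro power_strict_mono) auto
    moreover have "(2 * w^3)^4 < (real t + 1)^4"
      using tlt w0 by (intro power_strict_mono) auto
    moreover have "(2 * w^3)^4 = 16 * (real n)^3"
      unfolding w4[symmetric] by (simp add: power_mult_distrib power_mult[symmetric])
    ultimately show False by linarith
  qed
  have "u^3 \<ge> 2^3" using u198 by (intro power_mono) auto
  then have u31: "u^3 \<ge> 8" by simp
  have s_eq: "real s = of_int \<lfloor>u^3\<rfloor>" unfolding assms(7) u3
  proof -
    have "\<lfloor>u^3\<rfloor> \<ge> 0" using u31 u0 by simp
    then show "real (nat \<lfloor>u^3\<rfloor>) = of_int \<lfloor>u^3\<rfloor>" by simp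
  qed
  have s_le: "real s \<le> u^3" unfolding s_eq by linarith
  have s_gt: "real s > u^3 - 1" unfolding s_eq by linarith
  have s0: "s > 0" using s_gt u31 by linarith
  have S0: "S \<noteq> {}" using assms(6) m32 by auto
  have k_eq: "k = real j / u + u^2 / 2" unfolding assms(8) um usq by simp
  have jm: "j \<le> card S" "i \<le> card S" using assms(6) m n_def by auto
  have cj: "card {x\<in>S. rank S x \<le> j} = j" by (rule card_rank_le[OF assms(5) jm(1)])
  have ci: "card {x\<in>S. rank S x \<ge> m - i + 1} = i"
    using card_rank_ge[OF assms(5) jm(2)] assms(6) by simp
  have mu: "real m = u^4" using u4 by simp
  have P1: "measure_pmf.prob (sample_pmf S s)
           {f. real (size (filter_mset (\<lambda>x. rank S x \<le> j) (samples s f))) \<ge> k} \<le> 1/u"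
  proof -
    define \<epsilon> where "\<epsilon> = k - real s * (real j / real m)"
    have "real s * (real j / real m) \<le> u^3 * (real j / u^4)"
      unfolding mu using s_le by (intro mult_right_mono) auto
    also have "\<dots> = real j / u" using u0 by (simp add: power_def field_simps)
    finally have h: "real s * (real j / real m) \<le> real j / u" .
    have eps: "\<epsilon> \<ge> u^2/2" using h unfolding \<epsilon>_def k_eq by linarith
    have "u^2/2 \<ge> 0" by simp
    then have e0: "\<epsilon> \<ge> 0" using eps by linarith
    have c1: "real s * (real (card {x\<in>S. rank S x \<le> j}) / real (card S)) + \<epsilon> \<le> k"
      unfolding cj assms(6) \<epsilon>_def by simp
    have "measure_pmf.prob (sample_pmf S s)
           {f. real (size (filter_mset (\<lambda>x. rank S x \<le> j) (samples s f))) \<ge> k}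
          \<le> exp (-2 * \<epsilon>^2 / s)"
      by (rule tail_bound[OF assms(5) S0 s0 e0 c1])
    also have "\<dots> \<le> exp (- (u/2))"
    proof -
      have "\<epsilon>^2 \<ge> (u^2/2)^2" using eps u0 by (intro power_mono) auto
      then have "4 * \<epsilon>^2 \<ge> u * u^3" by (simp add: power_def field_simps)
      moreover have "u * u^3 \<ge> u * real s" using s_le u0 by (intro mult_left_mono) auto
      ultimately have "4 * \<epsilon>^2 \<ge> u * real s" by linarith
      then have "2 * \<epsilon>^2 / s \<ge> u / 2" using s0 by (simp add: field_simps)
      then show ?thesis by simp
    qed
    also have "\<dots> \<le> 1/u"
      using exp_ge_u[of u] u0 by (simp add: exp_minus field_simps)
    finally show ?thesis .
  qed
  have P2: "measure_pmf.prob (sample_pmf S s)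
           {f. real (size (filter_mset (\<lambda>x. rank S x \<ge> m - i + 1) (samples s f))) \<ge> real s - k}
           \<le> 1/u"
  proof -
    define \<epsilon> where "\<epsilon> = real s - k - real s * (real i / real m)"
    have jt: "real m - real i = real j + real t" using m n_def by simp
    have "real s - real s * (real i / real m) = real s * (real m - real i) / real m"
      using m32 by (simp add: field_simps)
    also have "\<dots> = real s * (real j + real t) / u^4" using jt mu by simp
    also have "\<dots> \<ge> (u^3 - 1) * (real j + real t) / u^4"
      using s_gt u0 by (intro divide_right_mono mult_right_mono) auto
    finally have e1: "real s - real s * (real i / real m) \<ge> (u^3 - 1) * (real j + real t) / u^4" .
    have "(u^3 - 1) * (real j + real t) / u^4 = (real j + real t) / u - (real j + real t) / u^4"
      using u0 by (simp add: power_def field_simps)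
    moreover have "(real j + real t) / u^4 \<le> 1"
      using jt m32 unfolding mu[symmetric] by (simp add: divide_le_eq_1)
    ultimately have e2: "\<epsilon> \<ge> real t / u - 1 - u^2/2"
      using e1 unfolding \<epsilon>_def k_eq by (simp add: add_divide_distrib)
    have "real t / u \<ge> (u^3 + 3/4*u) / u" using tkey u0 by (intro divide_right_mono) auto
    also have "(u^3 + 3/4*u) / u = u^2 + 3/4" using u0 by (simp add: power_def field_simps)
    finally have eps: "\<epsilon> \<ge> u^2/2 - 1/4" using e2 by linarith
    have u2: "u^2 \<ge> 4" using u198 power_mono[of 2 u 2] by simp
    have eps0: "\<epsilon> \<ge> 0" using eps u2 by linarith
    have c2: "real s * (real (card {x\<in>S. rank S x \<ge> m - i + 1}) / real (card S)) + \<epsilon> \<le> real s - k"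
      unfolding ci assms(6) \<epsilon>_def by simp
    have "measure_pmf.prob (sample_pmf S s)
           {f. real (size (filter_mset (\<lambda>x. rank S x \<ge> m - i + 1) (samples s f))) \<ge> real s - k}
          \<le> exp (-2 * \<epsilon>^2 / s)"
      by (rule tail_bound[OF assms(5) S0 s0 eps0 c2])
    also have "\<dots> \<le> exp (- (u/2 - 4/19))"
    proof -
      have "\<epsilon>^2 \<ge> (u^2/2 - 1/4)^2" using eps u2 by (intro power_mono) auto
      also have "(u^2/2 - 1/4)^2 \<ge> u^4/4 - u^2/4" by (simp add: power2_eq_square power_def field_simps)
      finally have e3: "2 * \<epsilon>^2 \<ge> u^4/2 - u^2/2" by simp
      have "2 * \<epsilon>^2 / s \<ge> 2 * \<epsilon>^2 / u^3"
        using s_le s0 u0 by (intro divide_left_mono) auto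
      also have "2 * \<epsilon>^2 / u^3 \<ge> (u^4/2 - u^2/2) / u^3"
        using e3 u0 by (intro divide_right_mono) auto
      also have "(u^4/2 - u^2/2) / u^3 = u/2 - 1/(2*u)" using u0 by (simp add: power_def field_simps)
      also have "1/(2*u) \<le> 4/19" using u198 by (simp add: field_simps)
      ultimately have "2 * \<epsilon>^2 / s \<ge> u/2 - 4/19" by linarith
      then show ?thesis by simp
    qed
    also have "\<dots> \<le> 1/u"
      using exp_ge_u2[OF u198] u0 by (simp add: exp_minus field_simps)
    finally show ?thesis .
  qed
  show ?thesis using P1 P2 unfolding um by simp
qed

end
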